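(* Let $\beta>0$, $\bar\mu\in\mathbb{R}^{N\times p}$, $g\in C^3(\mathbb{R})$, $m=g\circ G_\beta$, and for indices $k=(k_1,k_2,k_3)\in[N]^3$, $j=(j_1,j_2,j_3)\in[p]^3$ and $x\in\mathbb{R}^{N\times p}$ define $$U_{(k,j)}(x)=\sup\Big\{\Big|\frac{\partial^3m}{\partial X_{k_1j_1}\partial X_{k_2j_2}\partial X_{k_3j_3}}(x+y)\Big|:y\in\mathbb{R}^{N\times p},\ \|y\|_\infty\le\beta^{-1}\Big\}.$$ Then for every $x\in\mathbb{R}^{N\times p}$, $$\sum_{(k,j)\in[N]^3\times[p]^3}U_{(k,j)}(x)\le e^{12}\{\|g'''\|_\infty+16\beta\|g''\|_\infty+24\beta^2\|g'\|_\infty\}.$$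
   Context: For $k\in[N]$ and $v\in\mathbb{R}^p$, $F_{\beta,\bar\mu_k}(v)=\beta^{-1}\log\big(\sum_{j=1}^p\exp(\beta\{v_j+\bar\mu_{kj}\})\big)$; for $X\in\mathbb{R}^{N\times p}$ with rows $X_{1\cdot},\dots,X_{N\cdot}$, $F_{\beta,\bar\mu}(X)=(F_{\beta,\bar\mu_1}(X_{1\cdot}),\dots,F_{\beta,\bar\mu_N}(X_{N\cdot}))'\in\mathbb{R}^N$; for $u\in\mathbb{R}^N$, $F_{\beta,0}(u)=\beta^{-1}\log\sum_{k=1}^N\exp(\beta u_k)$; $G_\beta(X)=-F_{\beta,0}(-F_{\beta,\bar\mu}(X))$. $\|y\|_\infty=\max_{k,j}|y_{kj}|$ and $\|g^{(r)}\|_\infty=\sup_t|g^{(r)}(t)|$. *)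

theory Defs
  imports "HOL-Analysis.Analysis" "HOL-Library.Extended_Real"
begin

text \<open>Matrices in R^{N x p} are represented as real^'p^'n, with row index type 'n (|'n| = N)
  and column index type 'p (|'p| = p).\<close>

definition F_row :: "real \<Rightarrow> real^'p \<Rightarrow> real^'p \<Rightarrow> real" where
  "F_row \<beta> mu v = (1/\<beta>) * ln (\<Sum>j\<in>UNIV. exp (\<beta> * (v$j + mu$j)))"

definition F_mat :: "real \<Rightarrow> real^'p^'n \<Rightarrow> real^'p^'n \<Rightarrow> real^'n" where
  "F_mat \<beta> mu X = (\<chi> k. F_row \<beta> (mu$k) (X$k))"

definition F_zero :: "real \<Rightarrow> real^'n \<Rightarrow> real" where
  "F_zero \<beta> u = (1/\<beta>) * ln (\<Sum>k\<in>UNIV. exp (\<beta> * u$k))"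

definition G_beta :: "real \<Rightarrow> real^'p^'n \<Rightarrow> real^'p^'n \<Rightarrow> real" where
  "G_beta \<beta> mu X = - F_zero \<beta> (- F_mat \<beta> mu X)"

definition unit_mat :: "'n \<Rightarrow> 'p \<Rightarrow> real^'p^'n" where
  "unit_mat k j = (\<chi> a b. if a = k \<and> b = j then 1 else 0)"

definition pd :: "(real^'p^'n \<Rightarrow> real) \<Rightarrow> 'n \<Rightarrow> 'p \<Rightarrow> real^'p^'n \<Rightarrow> real" where
  "pd f k j X = deriv (\<lambda>t. f (X + t *\<^sub>R unit_mat k j)) 0"

definition supnorm_mat :: "real^'p^'n \<Rightarrow> real" where
  "supnorm_mat y = Max {\<bar>y$k$j\<bar> | k j. True}"

definition C3 :: "(real \<Rightarrow> real) \<Rightarrow> bool" where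
  "C3 g \<longleftrightarrow> (\<forall>i<3. \<forall>t. ((deriv ^^ i) g has_real_derivative (deriv ^^ Suc i) g t) (at t))
            \<and> continuous_on UNIV ((deriv ^^ 3) g)"

definition supnorm_deriv :: "nat \<Rightarrow> (real \<Rightarrow> real) \<Rightarrow> ereal" where
  "supnorm_deriv r g = (SUP t. ereal \<bar>(deriv ^^ r) g t\<bar>)"

end

theory Submission
  imports Defs
begin

definition EE :: "real \<Rightarrow> real^'p^'n \<Rightarrow> real^'p^'n \<Rightarrow> 'n \<Rightarrow> 'p \<Rightarrow> real" where
  "EE b mu X k j = exp (b * (X$k$j + mu$k$j))"
definition SS :: "real \<Rightarrow> real^'p^'n \<Rightarrow> real^'p^'n \<Rightarrow> 'n \<Rightarrow> real" where
  "SS b mu X k = (\<Sum>j\<in>UNIV. EE b mu X k j)"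
definition TT :: "real \<Rightarrow> real^'p^'n \<Rightarrow> real^'p^'n \<Rightarrow> real" where
  "TT b mu X = (\<Sum>k\<in>UNIV. 1 / SS b mu X k)"
definition qq :: "real \<Rightarrow> real^'p^'n \<Rightarrow> real^'p^'n \<Rightarrow> 'n \<Rightarrow> 'p \<Rightarrow> real" where
  "qq b mu X k j = EE b mu X k j / (TT b mu X * (SS b mu X k)^2)"
definition pp :: "real \<Rightarrow> real^'p^'n \<Rightarrow> real^'p^'n \<Rightarrow> 'n \<Rightarrow> 'p \<Rightarrow> real" where
  "pp b mu X k j = EE b mu X k j / SS b mu X k"
definition dl :: "'n \<Rightarrow> 'p \<Rightarrow> 'n \<Rightarrow> 'p \<Rightarrow> real" where
  "dl a b c d = (if a = c \<and> b = d then 1 else 0)"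
definition ri :: "'n \<Rightarrow> 'n \<Rightarrow> real" where
  "ri a c = (if a = c then 1 else 0)"

lemma line_comp: "(X + t *\<^sub>R unit_mat a b)$k$j = X$k$j + (if k = a \<and> j = b then t else 0)"
  by (simp add: unit_mat_def)

lemma EE_pos: "EE b mu X k j > 0" by (simp add: EE_def)
lemma SS_pos: "SS b mu X k > 0"
  unfolding SS_def by (rule sum_pos) (auto simp: EE_pos)
lemma SS_nz[simp]: "SS b mu X k \<noteq> 0" using SS_pos[of b mu X k] by simp
lemma TT_pos: "TT b mu X > 0"
  unfolding TT_def by (rule sum_pos) (auto simp: SS_pos)

lemma TT_nz[simp]: "TT b mu X \<noteq> 0" using TT_pos[of b mu X] by simp

lemma G_eq: assumes "b \<noteq> 0" shows "G_beta b mu X = - (1/b) * ln (TT b mu X)"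
proof -
  have "F_zero b (- F_mat b mu X) = (1/b) * ln (TT b mu X)"
    unfolding F_zero_def TT_def
  proof (intro arg_cong[where f="\<lambda>z. (1/b) * ln z"] sum.cong refl)
    fix k
    have "exp (b * (- F_mat b mu X) $ k) = exp (- ln (SS b mu X k))"
      using assms by (simp add: F_mat_def F_row_def SS_def EE_def)
    also have "\<dots> = 1 / SS b mu X k" using SS_pos[of b mu X k]
      by (simp add: exp_minus inverse_eq_divide)
    finally show "exp (b * (- F_mat b mu X) $ k) = 1 / SS b mu X k" .
  qed
  then show ?thesis by (simp add: G_beta_def)
qed

lemma EE_d: "((\<lambda>t. EE b mu (X + t *\<^sub>R unit_mat a c) k j) has_real_derivative
   b * dl k j a c * EE b mu X k j) (at 0)"
proof (cases "k = a \<and> j = c")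
  case True
  then show ?thesis unfolding EE_def line_comp dl_def
    by (auto intro!: derivative_eq_intros)
next
  case False
  then show ?thesis unfolding EE_def line_comp dl_def
    by (auto intro!: derivative_eq_intros)
qed

lemma ifz:
  "(if P then (x::real) else 0) * y = (if P then x*y else 0)"
  "y * (if P then (x::real) else 0) = (if P then y*x else 0)"
  "(if P then (x::real) else 0) / y = (if P then x/y else 0)"
  "- (if P then (x::real) else 0) = (if P then -x else 0)"
  by auto

lemma sum_dl_j: "(\<Sum>j\<in>UNIV. (f::'p::finite\<Rightarrow>real) j * dl k j a c) = ri k a * f c"
  by (cases "k = a") (auto simp: dl_def ri_def ifz sum.delta sum.delta')

lemma SS_d: "((\<lambda>t. SS b mu (X + t *\<^sub>R unit_mat a c) k) has_real_derivative
   b * ri k a * EE b mu X a c) (at 0)"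
proof -
  have "((\<lambda>t. SS b mu (X + t *\<^sub>R unit_mat a c) k) has_real_derivative
     (\<Sum>j\<in>UNIV. b * dl k j a c * EE b mu X k j)) (at 0)"
    unfolding SS_def by (intro DERIV_sum EE_d)
  moreover have "(\<Sum>j\<in>UNIV. b * dl k j a c * EE b mu X k j) = b * ri k a * EE b mu X a c"
    by (cases "k = a") (auto simp: dl_def ri_def ifz sum.delta sum.delta')
  ultimately show ?thesis by simp
qed

lemma TT_d: "((\<lambda>t. TT b mu (X + t *\<^sub>R unit_mat a c)) has_real_derivative
   - (b * EE b mu X a c / (SS b mu X a)^2)) (at 0)"
proof -
  have "((\<lambda>t. TT b mu (X + t *\<^sub>R unit_mat a c)) has_real_derivative
     (\<Sum>k\<in>UNIV. - (b * ri k a * EE b mu X a c) / (SS b mu X k)^2)) (at 0)"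
    unfolding TT_def
    apply (intro DERIV_sum)
    apply (rule derivative_eq_intros SS_d | simp)+
    by (auto simp: power2_eq_square)
  moreover have "(\<Sum>k\<in>UNIV. - (b * ri k a * EE b mu X a c) / (SS b mu X k)^2)
     = - (b * EE b mu X a c / (SS b mu X a)^2)"
    by (auto simp: ri_def ifz sum.delta sum.delta')
  ultimately show ?thesis by simp
qed

definition Dq :: "real \<Rightarrow> real^'p^'n \<Rightarrow> real^'p^'n \<Rightarrow> 'n \<Rightarrow> 'p \<Rightarrow> 'n \<Rightarrow> 'p \<Rightarrow> real" where
  "Dq b mu X k j a c = b * qq b mu X k j * (dl k j a c - 2 * ri k a * pp b mu X a c + qq b mu X a c)"
definition Dp :: "real \<Rightarrow> real^'p^'n \<Rightarrow> real^'p^'n \<Rightarrow> 'n \<Rightarrow> 'p \<Rightarrow> 'n \<Rightarrow> 'p \<Rightarrow> real" where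
  "Dp b mu X k j a c = b * pp b mu X k j * (dl k j a c - ri k a * pp b mu X a c)"

lemma G_d: assumes "b \<noteq> 0"
  shows "((\<lambda>t. G_beta b mu (X + t *\<^sub>R unit_mat a c)) has_real_derivative qq b mu X a c) (at 0)"
proof -
  have e: "(\<lambda>t. G_beta b mu (X + t *\<^sub>R unit_mat a c)) = (\<lambda>t. - (1/b) * ln (TT b mu (X + t *\<^sub>R unit_mat a c)))"
    using G_eq[OF assms] by auto
  have "((\<lambda>t. - (1/b) * ln (TT b mu (X + t *\<^sub>R unit_mat a c))) has_real_derivative qq b mu X a c) (at 0)"
    apply (rule derivative_eq_intros TT_d | (simp add: TT_pos; fail))+
    using assms TT_pos[of b mu X] by (simp add: qq_def field_simps)
  then show ?thesis using e by simp
qed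

lemma pp_d: "((\<lambda>t. pp b mu (X + t *\<^sub>R unit_mat a c) k j) has_real_derivative Dp b mu X k j a c) (at 0)"
  unfolding pp_def
  apply (rule derivative_eq_intros EE_d SS_d | (simp; fail))+
  by (cases "k = a") (auto simp: Dp_def pp_def ri_def field_simps)

lemma qq_d: "((\<lambda>t. qq b mu (X + t *\<^sub>R unit_mat a c) k j) has_real_derivative Dq b mu X k j a c) (at 0)"
  unfolding qq_def
  apply (rule derivative_eq_intros EE_d SS_d TT_d | (simp add: TT_pos; fail))+
  using TT_pos[of b mu X] by (cases "k = a") (auto simp: Dq_def pp_def qq_def ri_def field_simps power2_eq_square)

definition DDq :: "real \<Rightarrow> real^'p^'n \<Rightarrow> real^'p^'n \<Rightarrow> 'n \<Rightarrow> 'p \<Rightarrow> 'n \<Rightarrow> 'p \<Rightarrow> 'n \<Rightarrow> 'p \<Rightarrow> real" where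
  "DDq b mu X k j a c e f = b * (Dq b mu X k j e f * (dl k j a c - 2 * ri k a * pp b mu X a c + qq b mu X a c)
     + qq b mu X k j * (- 2 * ri k a * Dp b mu X a c e f + Dq b mu X a c e f))"

lemma Dq_d: "((\<lambda>t. Dq b mu (X + t *\<^sub>R unit_mat e f) k j a c) has_real_derivative DDq b mu X k j a c e f) (at 0)"
  unfolding Dq_def
  apply (rule derivative_eq_intros qq_d pp_d | (simp; fail))+
  by (simp add: DDq_def algebra_simps)

lemma pd_eq: assumes "\<And>X. ((\<lambda>t. F (X + t *\<^sub>R unit_mat a c)) has_real_derivative F' X) (at 0)"
  shows "pd F a c = F'"
  using assms by (auto simp: pd_def fun_eq_iff intro: DERIV_imp_deriv)

lemma gG_d: assumes "C3 g" "b \<noteq> 0" "i < 3"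
  shows "((\<lambda>t. (deriv ^^ i) g (G_beta b mu (X + t *\<^sub>R unit_mat a c))) has_real_derivative
     (deriv ^^ Suc i) g (G_beta b mu X) * qq b mu X a c) (at 0)"
proof -
  have h: "((deriv ^^ i) g has_real_derivative (deriv ^^ Suc i) g (G_beta b mu X)) (at (G_beta b mu X))"
    using assms unfolding C3_def by blast
  have "((\<lambda>t. (deriv ^^ i) g (G_beta b mu (X + t *\<^sub>R unit_mat a c))) has_real_derivative
     (deriv ^^ Suc i) g (G_beta b mu X) * qq b mu X a c) (at 0)"
    using DERIV_chain2[of "(deriv ^^ i) g" _ "\<lambda>t. G_beta b mu (X + t *\<^sub>R unit_mat a c)", OF _ G_d[OF assms(2)]] h
    by simp
  then show ?thesis .
qed

lemma pd1: assumes "C3 g" "b \<noteq> 0"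
  shows "pd (g \<circ> G_beta b mu) a c = (\<lambda>X. (deriv ^^ 1) g (G_beta b mu X) * qq b mu X a c)"
  apply (rule pd_eq)
  using gG_d[OF assms, of 0] by (simp add: o_def)

lemma pd2: assumes "C3 g" "b \<noteq> 0"
  shows "pd (\<lambda>X. (deriv ^^ 1) g (G_beta b mu X) * qq b mu X a3 c3) a2 c2
    = (\<lambda>X. (deriv ^^ 2) g (G_beta b mu X) * qq b mu X a2 c2 * qq b mu X a3 c3
          + (deriv ^^ 1) g (G_beta b mu X) * Dq b mu X a3 c3 a2 c2)"
  apply (rule pd_eq)
  apply (rule derivative_eq_intros qq_d gG_d[OF assms] | (simp; fail))+
  by (simp add: algebra_simps numeral_2_eq_2)

lemma pd3: assumes "C3 g" "b \<noteq> 0"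
  shows "pd (\<lambda>X. (deriv ^^ 2) g (G_beta b mu X) * qq b mu X a2 c2 * qq b mu X a3 c3
          + (deriv ^^ 1) g (G_beta b mu X) * Dq b mu X a3 c3 a2 c2) a1 c1
    = (\<lambda>X. (deriv ^^ 3) g (G_beta b mu X) * qq b mu X a1 c1 * qq b mu X a2 c2 * qq b mu X a3 c3
          + (deriv ^^ 2) g (G_beta b mu X) * (Dq b mu X a2 c2 a1 c1 * qq b mu X a3 c3 + qq b mu X a2 c2 * Dq b mu X a3 c3 a1 c1)
          + (deriv ^^ 2) g (G_beta b mu X) * qq b mu X a1 c1 * Dq b mu X a3 c3 a2 c2
          + (deriv ^^ 1) g (G_beta b mu X) * DDq b mu X a3 c3 a2 c2 a1 c1)"
  apply (rule pd_eq)
  apply (rule derivative_eq_intros qq_d Dq_d gG_d[OF assms] | (simp; fail))+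
  by (simp add: algebra_simps numeral_2_eq_2 numeral_3_eq_3)

lemma EE_up: assumes "b > 0" "\<bar>y$k$j\<bar> \<le> 1/b"
  shows "EE b mu (X + y) k j \<le> exp 1 * EE b mu X k j" "EE b mu X k j \<le> exp 1 * EE b mu (X + y) k j"
proof -
  have e: "EE b mu (X + y) k j = EE b mu X k j * exp (b * y$k$j)"
    by (simp add: EE_def algebra_simps flip: exp_add)
  have "\<bar>b * y$k$j\<bar> \<le> 1" using assms by (simp add: abs_mult field_simps)
  then have 1: "b * y$k$j \<le> 1" "- (b * y$k$j) \<le> 1" by auto
  have "exp (b * y$k$j) \<le> exp 1" using 1 by simp
  then show "EE b mu (X + y) k j \<le> exp 1 * EE b mu X k j"
    unfolding e using EE_pos[of b mu X k j] by (simp add: mult.commute)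
  have "1 \<le> exp 1 * exp (b * y$k$j)" using 1 by (simp flip: exp_add)
  then have "EE b mu X k j * 1 \<le> EE b mu X k j * (exp 1 * exp (b * y$k$j))"
    using EE_pos[of b mu X k j] by (intro mult_left_mono) auto
  then show "EE b mu X k j \<le> exp 1 * EE b mu (X + y) k j" unfolding e by (simp add: algebra_simps)
qed

lemma SS_up: assumes "b > 0" "\<And>k j. \<bar>y$k$j\<bar> \<le> 1/b"
  shows "SS b mu (X + y) k \<le> exp 1 * SS b mu X k" "SS b mu X k \<le> exp 1 * SS b mu (X + y) k"
  unfolding SS_def sum_distrib_left using EE_up[OF assms(1) assms(2)] by (auto intro: sum_mono)

lemma TT_up: assumes "b > 0" "\<And>k j. \<bar>y$k$j\<bar> \<le> 1/b"
  shows "TT b mu X \<le> exp 1 * TT b mu (X + y)"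
  unfolding TT_def sum_distrib_left
proof (rule sum_mono)
  fix k
  have "SS b mu (X + y) k \<le> exp 1 * SS b mu X k" by (rule SS_up[OF assms])
  then show "1 / SS b mu X k \<le> exp 1 * (1 / SS b mu (X + y) k)"
    using SS_pos[of b mu X k] SS_pos[of b mu "X+y" k] by (simp add: field_simps)
qed

lemma pp_up: assumes "b > 0" "\<And>k j. \<bar>y$k$j\<bar> \<le> 1/b"
  shows "pp b mu (X + y) k j \<le> exp 4 * pp b mu X k j"
proof -
  have a: "EE b mu (X + y) k j \<le> exp 1 * EE b mu X k j" using EE_up assms by blast
  have s: "SS b mu X k \<le> exp 1 * SS b mu (X + y) k" using SS_up assms by blast
  have "pp b mu (X + y) k j \<le> exp 1 * EE b mu X k j / SS b mu (X + y) k"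
    unfolding pp_def using a SS_pos[of b mu "X+y" k] by (simp add: divide_right_mono)
  also have "\<dots> \<le> exp 1 * EE b mu X k j / (SS b mu X k / exp 1)"
    using s SS_pos[of b mu X k] EE_pos[of b mu X k j] SS_pos[of b mu "X+y" k]
    by (intro divide_left_mono) (auto simp: field_simps)
  also have "\<dots> = exp 2 * pp b mu X k j"
    by (simp add: pp_def field_simps flip: exp_add)
  also have "\<dots> \<le> exp 4 * pp b mu X k j"
    using EE_pos[of b mu X k j] SS_pos[of b mu X k] by (intro mult_right_mono) (auto simp: pp_def)
  finally show ?thesis .
qed

lemma qq_up: assumes "b > 0" "\<And>k j. \<bar>y$k$j\<bar> \<le> 1/b"
  shows "qq b mu (X + y) k j \<le> exp 4 * qq b mu X k j"
proof -
  have a: "EE b mu (X + y) k j \<le> exp 1 * EE b mu X k j" using EE_up assms by blast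
  have s: "SS b mu X k \<le> exp 1 * SS b mu (X + y) k" using SS_up assms by blast
  have t: "TT b mu X \<le> exp 1 * TT b mu (X + y)" using TT_up assms by blast
  have s2: "SS b mu X k ^ 2 \<le> (exp 1 * SS b mu (X + y) k)^2"
    using s SS_pos[of b mu X k] by (intro power_mono) auto
  have d: "TT b mu X * SS b mu X k ^ 2 \<le> exp 3 * (TT b mu (X + y) * SS b mu (X + y) k ^ 2)"
  proof -
    have "TT b mu X * SS b mu X k ^ 2 \<le> (exp 1 * TT b mu (X + y)) * (exp 1 * SS b mu (X + y) k)^2"
      using t s2 TT_pos[of b mu X] by (intro mult_mono) auto
    also have "\<dots> = (exp 1 * exp 1 * exp 1) * (TT b mu (X + y) * SS b mu (X + y) k ^ 2)"
      by (simp add: power2_eq_square algebra_simps)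
    also have "exp 1 * exp 1 * exp 1 = exp (3::real)" by (simp flip: exp_add)
    finally show ?thesis .
  qed
  have pos: "0 < TT b mu (X + y) * SS b mu (X + y) k ^ 2" "0 < TT b mu X * SS b mu X k ^ 2"
    using TT_pos[of b mu "X+y"] SS_pos[of b mu "X+y" k] TT_pos[of b mu X] SS_pos[of b mu X k] by auto
  have "qq b mu (X + y) k j \<le> exp 1 * EE b mu X k j / (TT b mu (X + y) * SS b mu (X + y) k ^ 2)"
    unfolding qq_def using a pos by (simp add: divide_right_mono)
  also have "\<dots> \<le> exp 1 * EE b mu X k j / ((TT b mu X * SS b mu X k ^ 2) / exp 3)"
    using d pos EE_pos[of b mu X k j]
    by (intro divide_left_mono) (auto simp: field_simps TT_pos intro!: mult_pos_pos)
  also have "\<dots> = exp 4 * qq b mu X k j"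
    by (simp add: qq_def field_simps flip: exp_add)
  finally show ?thesis .
qed

definition RR :: "real \<Rightarrow> real^'p^'n \<Rightarrow> real^'p^'n \<Rightarrow> 'n \<Rightarrow> 'p \<Rightarrow> 'n \<Rightarrow> 'p \<Rightarrow> real" where
  "RR b mu X k j a c = dl k j a c + 2 * ri k a * pp b mu X a c + qq b mu X a c"
definition HH :: "real \<Rightarrow> real^'p^'n \<Rightarrow> real^'p^'n \<Rightarrow> 'n \<Rightarrow> 'p \<Rightarrow> 'n \<Rightarrow> 'p \<Rightarrow> real" where
  "HH b mu X k j a c = dl k j a c + ri k a * pp b mu X a c"

lemma qq_nn: "0 \<le> qq b mu X k j" using EE_pos[of b mu X k j] TT_pos[of b mu X] SS_pos[of b mu X k]
  by (simp add: qq_def)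
lemma pp_nn: "0 \<le> pp b mu X k j" using EE_pos[of b mu X k j] SS_pos[of b mu X k]
  by (simp add: pp_def)
lemma dl_nn: "0 \<le> dl k j a c" by (simp add: dl_def)
lemma ri_nn: "0 \<le> ri k a" by (simp add: ri_def)
lemma RR_nn: "0 \<le> RR b mu X k j a c" by (simp add: RR_def dl_nn ri_nn pp_nn qq_nn)
lemma HH_nn: "0 \<le> HH b mu X k j a c" by (simp add: HH_def dl_nn ri_nn pp_nn)
lemma ripp_nn: "0 \<le> ri k a * pp b mu X a c" by (simp add: ri_nn pp_nn)

lemma abs3: "0 \<le> (A::real) \<Longrightarrow> 0 \<le> B \<Longrightarrow> 0 \<le> C \<Longrightarrow> \<bar>A - B + C\<bar> \<le> A + B + C" by arith
lemma abs2: "0 \<le> (A::real) \<Longrightarrow> 0 \<le> B \<Longrightarrow> \<bar>A - B\<bar> \<le> A + B" by arith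

lemma Dq_bd: assumes "b > 0" shows "\<bar>Dq b mu X k j a c\<bar> \<le> b * (qq b mu X k j * RR b mu X k j a c)"
proof -
  have "\<bar>dl k j a c - 2 * ri k a * pp b mu X a c + qq b mu X a c\<bar> \<le> RR b mu X k j a c"
    unfolding RR_def by (rule abs3) (simp_all add: dl_nn ri_nn pp_nn qq_nn)
  then show ?thesis using assms qq_nn[of b mu X k j]
    by (simp add: Dq_def abs_mult mult_left_mono)
qed

lemma Dp_bd: assumes "b > 0" shows "\<bar>Dp b mu X k j a c\<bar> \<le> b * (pp b mu X k j * HH b mu X k j a c)"
proof -
  have "\<bar>dl k j a c - ri k a * pp b mu X a c\<bar> \<le> HH b mu X k j a c"
    unfolding HH_def by (rule abs2) (simp_all add: dl_nn ri_nn pp_nn)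
  then show ?thesis using assms pp_nn[of b mu X k j]
    by (simp add: Dp_def abs_mult mult_left_mono)
qed

lemma DDq_bd: assumes "b > 0" shows "\<bar>DDq b mu X k j a c e f\<bar> \<le> b^2 * (qq b mu X k j * RR b mu X k j e f * RR b mu X k j a c
    + 2 * (qq b mu X k j * (ri k a * pp b mu X a c) * HH b mu X a c e f)
    + qq b mu X k j * qq b mu X a c * RR b mu X a c e f)"
proof -
  let ?Y = "dl k j a c - 2 * ri k a * pp b mu X a c + qq b mu X a c"
  have y: "\<bar>?Y\<bar> \<le> RR b mu X k j a c"
    unfolding RR_def by (rule abs3) (simp_all add: dl_nn ri_nn pp_nn qq_nn)
  have 1: "\<bar>Dq b mu X k j e f * ?Y\<bar> \<le> b * (qq b mu X k j * RR b mu X k j e f) * RR b mu X k j a c"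
    unfolding abs_mult by (intro mult_mono Dq_bd assms y) (auto intro!: mult_nonneg_nonneg qq_nn RR_nn assms[THEN less_imp_le])
  have 2: "\<bar>qq b mu X k j * (- 2 * ri k a * Dp b mu X a c e f + Dq b mu X a c e f)\<bar>
     \<le> qq b mu X k j * (2 * ri k a * (b * (pp b mu X a c * HH b mu X a c e f)) + b * (qq b mu X a c * RR b mu X a c e f))"
  proof -
    have "\<bar>- 2 * ri k a * Dp b mu X a c e f + Dq b mu X a c e f\<bar> \<le> 2 * ri k a * \<bar>Dp b mu X a c e f\<bar> + \<bar>Dq b mu X a c e f\<bar>"
      proof -
      have "\<bar>- 2 * ri k a * Dp b mu X a c e f\<bar> = 2 * ri k a * \<bar>Dp b mu X a c e f\<bar>"
        using ri_nn[of k a] by (simp add: abs_mult)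
      then show ?thesis using abs_triangle_ineq[of "- 2 * ri k a * Dp b mu X a c e f" "Dq b mu X a c e f"] by linarith
    qed
    also have "\<dots> \<le> 2 * ri k a * (b * (pp b mu X a c * HH b mu X a c e f)) + b * (qq b mu X a c * RR b mu X a c e f)"
      using Dp_bd[OF assms] Dq_bd[OF assms(1)] ri_nn[of k a] by (intro add_mono mult_left_mono) auto
    finally show ?thesis using qq_nn[of b mu X k j] by (simp add: abs_mult mult_left_mono)
  qed
  have "\<bar>DDq b mu X k j a c e f\<bar> \<le> b * (\<bar>Dq b mu X k j e f * ?Y\<bar> + \<bar>qq b mu X k j * (- 2 * ri k a * Dp b mu X a c e f + Dq b mu X a c e f)\<bar>)"
  proof -
    have "\<bar>DDq b mu X k j a c e f\<bar> = b * \<bar>Dq b mu X k j e f * ?Y + qq b mu X k j * (- 2 * ri k a * Dp b mu X a c e f + Dq b mu X a c e f)\<bar>"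
      unfolding DDq_def using assms by (simp add: abs_mult)
    then show ?thesis using assms by (simp add: abs_triangle_ineq mult_left_mono)
  qed
  also have "\<dots> \<le> b * (b * (qq b mu X k j * RR b mu X k j e f) * RR b mu X k j a c
     + qq b mu X k j * (2 * ri k a * (b * (pp b mu X a c * HH b mu X a c e f)) + b * (qq b mu X a c * RR b mu X a c e f)))"
    using 1 2 assms by (intro mult_left_mono add_mono) auto
  also have "\<dots> = b^2 * (qq b mu X k j * RR b mu X k j e f * RR b mu X k j a c
    + 2 * (qq b mu X k j * (ri k a * pp b mu X a c) * HH b mu X a c e f)
    + qq b mu X k j * qq b mu X a c * RR b mu X a c e f)"
    by (simp add: power2_eq_square algebra_simps)
  finally show ?thesis .
qed

lemma sum_qq: "(\<Sum>k\<in>UNIV. \<Sum>j\<in>UNIV. qq b mu X k j) = 1"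
proof -
  have "\<And>k. (\<Sum>j\<in>UNIV. qq b mu X k j) = (1 / SS b mu X k) / TT b mu X"
    by (simp add: qq_def sum_divide_distrib[symmetric] SS_def[symmetric] power2_eq_square field_simps)
  then have "(\<Sum>k\<in>UNIV. \<Sum>j\<in>UNIV. qq b mu X k j) = (\<Sum>k\<in>UNIV. (1 / SS b mu X k) / TT b mu X)"
    by simp
  also have "\<dots> = TT b mu X / TT b mu X" by (simp only: sum_divide_distrib[symmetric] TT_def)
  finally show ?thesis by simp
qed

lemma sum_pp: "(\<Sum>j\<in>UNIV. pp b mu X k j) = 1"
  by (simp add: pp_def sum_divide_distrib[symmetric] SS_def[symmetric])

lemma sum_dl: "(\<Sum>a\<in>UNIV. \<Sum>c\<in>UNIV. dl (k::'n::finite) (j::'p::finite) a c) = 1"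
proof -
  have "\<And>a. (\<Sum>c\<in>UNIV. dl k j a c) = (if k = a then 1 else 0)"
    by (simp add: dl_def)
  then show ?thesis by simp
qed

lemma sum_ripp: "(\<Sum>a\<in>UNIV. \<Sum>c\<in>UNIV. ri k a * pp b mu X a c) = 1"
proof -
  have "\<And>a. (\<Sum>c\<in>UNIV. ri k a * pp b mu X a c) = (if k = a then 1 else 0)"
    by (simp add: ri_def sum_pp)
  then show ?thesis by simp
qed

lemma sum_RR: "(\<Sum>a\<in>UNIV. \<Sum>c\<in>UNIV. RR b mu X k j a c) = 4"
proof -
  have "(\<Sum>a\<in>UNIV. \<Sum>c\<in>UNIV. RR b mu X k j a c) = (\<Sum>a\<in>UNIV. \<Sum>c\<in>UNIV. dl k j a c)
     + 2 * (\<Sum>a\<in>UNIV. \<Sum>c\<in>UNIV. ri k a * pp b mu X a c) + (\<Sum>a\<in>UNIV. \<Sum>c\<in>UNIV. qq b mu X a c)"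
    by (simp add: RR_def sum.distrib sum_distrib_left mult.assoc)
  then show ?thesis by (simp add: sum_dl sum_ripp sum_qq)
qed

lemma sum_HH: "(\<Sum>a\<in>UNIV. \<Sum>c\<in>UNIV. HH b mu X k j a c) = 2"
proof -
  have "(\<Sum>a\<in>UNIV. \<Sum>c\<in>UNIV. HH b mu X k j a c) = (\<Sum>a\<in>UNIV. \<Sum>c\<in>UNIV. dl k j a c)
     + (\<Sum>a\<in>UNIV. \<Sum>c\<in>UNIV. ri k a * pp b mu X a c)"
    by (simp add: HH_def sum.distrib)
  then show ?thesis by (simp add: sum_dl sum_ripp)
qed

lemma gsum:
  fixes A :: "'n::finite \<Rightarrow> 'p::finite \<Rightarrow> real" and B :: "'n \<Rightarrow> 'p \<Rightarrow> 'n \<Rightarrow> 'p \<Rightarrow> real"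
    and C :: "'n \<Rightarrow> 'p \<Rightarrow> 'n \<Rightarrow> 'p \<Rightarrow> 'n \<Rightarrow> 'p \<Rightarrow> real"
  assumes "\<And>k3 j3 k2 j2. (\<Sum>k1\<in>UNIV. \<Sum>j1\<in>UNIV. C k3 j3 k2 j2 k1 j1) = ca"
    "\<And>k3 j3. (\<Sum>k2\<in>UNIV. \<Sum>j2\<in>UNIV. B k3 j3 k2 j2) = cb" "(\<Sum>k3\<in>UNIV. \<Sum>j3\<in>UNIV. A k3 j3) = cc"
  shows "(\<Sum>k3\<in>UNIV. \<Sum>j3\<in>UNIV. \<Sum>k2\<in>UNIV. \<Sum>j2\<in>UNIV. \<Sum>k1\<in>UNIV. \<Sum>j1\<in>UNIV.
     A k3 j3 * B k3 j3 k2 j2 * C k3 j3 k2 j2 k1 j1) = cc * cb * ca"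
  by (simp add: sum_distrib_left[symmetric] sum_distrib_right[symmetric] assms)

definition S321 :: "('n::finite \<Rightarrow> 'p::finite \<Rightarrow> 'n \<Rightarrow> 'p \<Rightarrow> 'n \<Rightarrow> 'p \<Rightarrow> real) \<Rightarrow> real" where
  "S321 F = (\<Sum>k3\<in>UNIV. \<Sum>j3\<in>UNIV. \<Sum>k2\<in>UNIV. \<Sum>j2\<in>UNIV. \<Sum>k1\<in>UNIV. \<Sum>j1\<in>UNIV. F k3 j3 k2 j2 k1 j1)"

lemma S321_add: "S321 (\<lambda>a b c d e f. F a b c d e f + G a b c d e f) = S321 F + S321 G"
  by (simp add: S321_def sum.distrib)
lemma S321_mult: "S321 (\<lambda>a b c d e f. r * F a b c d e f) = r * S321 F"
  by (simp add: S321_def sum_distrib_left)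

lemma perm321: fixes f :: "'n::finite \<Rightarrow> 'n \<Rightarrow> 'n \<Rightarrow> 'p::finite \<Rightarrow> 'p \<Rightarrow> 'p \<Rightarrow> real"
  shows "(\<Sum>k1\<in>UNIV. \<Sum>k2\<in>UNIV. \<Sum>k3\<in>UNIV. \<Sum>j1\<in>UNIV. \<Sum>j2\<in>UNIV. \<Sum>j3\<in>UNIV. f k1 k2 k3 j1 j2 j3)
   = S321 (\<lambda>k3 j3 k2 j2 k1 j1. f k1 k2 k3 j1 j2 j3)"
  unfolding S321_def
  apply (simp add: sum.cartesian_product)
  apply (rule sum.reindex_bij_witness[of _ "\<lambda>(k3,j3,k2,j2,k1,j1). (k1,k2,k3,j1,j2,j3)" "\<lambda>(k1,k2,k3,j1,j2,j3). (k3,j3,k2,j2,k1,j1)"])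
  by auto

definition WW :: "real \<Rightarrow> real^'p^'n \<Rightarrow> real \<Rightarrow> real \<Rightarrow> real \<Rightarrow> real^'p^'n \<Rightarrow> 'n \<Rightarrow> 'p \<Rightarrow> 'n \<Rightarrow> 'p \<Rightarrow> 'n \<Rightarrow> 'p \<Rightarrow> real" where
  "WW b mu M1 M2 M3 X k3 j3 k2 j2 k1 j1 =
     M3 * (qq b mu X k3 j3 * qq b mu X k2 j2 * qq b mu X k1 j1)
   + (M2 * b) * (qq b mu X k3 j3 * qq b mu X k2 j2 * RR b mu X k2 j2 k1 j1)
   + (M2 * b) * (qq b mu X k3 j3 * qq b mu X k2 j2 * RR b mu X k3 j3 k1 j1)
   + (M2 * b) * (qq b mu X k3 j3 * RR b mu X k3 j3 k2 j2 * qq b mu X k1 j1)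
   + (M1 * b^2) * (qq b mu X k3 j3 * RR b mu X k3 j3 k2 j2 * RR b mu X k3 j3 k1 j1)
   + (2 * M1 * b^2) * (qq b mu X k3 j3 * (ri k3 k2 * pp b mu X k2 j2) * HH b mu X k2 j2 k1 j1)
   + (M1 * b^2) * (qq b mu X k3 j3 * qq b mu X k2 j2 * RR b mu X k2 j2 k1 j1)"

lemma sum_WW: "S321 (WW b mu M1 M2 M3 X) = M3 + 12 * b * M2 + 24 * b^2 * M1"
proof -
  have e: "S321 (WW b mu M1 M2 M3 X) =
      M3 * S321 (\<lambda>k3 j3 k2 j2 k1 j1. qq b mu X k3 j3 * qq b mu X k2 j2 * qq b mu X k1 j1)
    + (M2 * b) * S321 (\<lambda>k3 j3 k2 j2 k1 j1. qq b mu X k3 j3 * qq b mu X k2 j2 * RR b mu X k2 j2 k1 j1)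
    + (M2 * b) * S321 (\<lambda>k3 j3 k2 j2 k1 j1. qq b mu X k3 j3 * qq b mu X k2 j2 * RR b mu X k3 j3 k1 j1)
    + (M2 * b) * S321 (\<lambda>k3 j3 k2 j2 k1 j1. qq b mu X k3 j3 * RR b mu X k3 j3 k2 j2 * qq b mu X k1 j1)
    + (M1 * b^2) * S321 (\<lambda>k3 j3 k2 j2 k1 j1. qq b mu X k3 j3 * RR b mu X k3 j3 k2 j2 * RR b mu X k3 j3 k1 j1)
    + (2 * M1 * b^2) * S321 (\<lambda>k3 j3 k2 j2 k1 j1. qq b mu X k3 j3 * (ri k3 k2 * pp b mu X k2 j2) * HH b mu X k2 j2 k1 j1)
    + (M1 * b^2) * S321 (\<lambda>k3 j3 k2 j2 k1 j1. qq b mu X k3 j3 * qq b mu X k2 j2 * RR b mu X k2 j2 k1 j1)"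
    unfolding WW_def by (simp only: S321_add S321_mult)
  have s1: "S321 (\<lambda>k3 j3 k2 j2 k1 j1. qq b mu X k3 j3 * qq b mu X k2 j2 * qq b mu X k1 j1) = 1"
    unfolding S321_def by (subst gsum[where ca=1 and cb=1 and cc=1]) (simp_all add: sum_qq)
  have s2: "S321 (\<lambda>k3 j3 k2 j2 k1 j1. qq b mu X k3 j3 * qq b mu X k2 j2 * RR b mu X k2 j2 k1 j1) = 4"
    unfolding S321_def by (subst gsum[where ca=4 and cb=1 and cc=1]) (simp_all add: sum_qq sum_RR)
  have s3: "S321 (\<lambda>k3 j3 k2 j2 k1 j1. qq b mu X k3 j3 * qq b mu X k2 j2 * RR b mu X k3 j3 k1 j1) = 4"
    unfolding S321_def by (subst gsum[where ca=4 and cb=1 and cc=1]) (simp_all add: sum_qq sum_RR)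
  have s4: "S321 (\<lambda>k3 j3 k2 j2 k1 j1. qq b mu X k3 j3 * RR b mu X k3 j3 k2 j2 * qq b mu X k1 j1) = 4"
    unfolding S321_def by (subst gsum[where ca=1 and cb=4 and cc=1]) (simp_all add: sum_qq sum_RR)
  have s5: "S321 (\<lambda>k3 j3 k2 j2 k1 j1. qq b mu X k3 j3 * RR b mu X k3 j3 k2 j2 * RR b mu X k3 j3 k1 j1) = 16"
    unfolding S321_def by (subst gsum[where ca=4 and cb=4 and cc=1]) (simp_all add: sum_qq sum_RR)
  have s6: "S321 (\<lambda>k3 j3 k2 j2 k1 j1. qq b mu X k3 j3 * (ri k3 k2 * pp b mu X k2 j2) * HH b mu X k2 j2 k1 j1) = 2"
    unfolding S321_def by (subst gsum[where ca=2 and cb=1 and cc=1]) (simp_all add: sum_qq sum_HH sum_ripp)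
  show ?thesis unfolding e s1 s2 s3 s4 s5 s6 by (simp add: algebra_simps)
qed

lemma mb: "\<bar>g\<bar> \<le> (M::real) \<Longrightarrow> \<bar>x\<bar> \<le> B \<Longrightarrow> \<bar>g * x\<bar> \<le> M * B"
  unfolding abs_mult by (rule mult_mono) auto

lemma V_bd: assumes "b > 0"
  and g3: "\<bar>(deriv ^^ 3) g (G_beta b mu X)\<bar> \<le> M3"
  and g2: "\<bar>(deriv ^^ 2) g (G_beta b mu X)\<bar> \<le> M2"
  and g1: "\<bar>(deriv ^^ 1) g (G_beta b mu X)\<bar> \<le> M1"
  shows "\<bar>(deriv ^^ 3) g (G_beta b mu X) * qq b mu X a1 c1 * qq b mu X a2 c2 * qq b mu X a3 c3
          + (deriv ^^ 2) g (G_beta b mu X) * (Dq b mu X a2 c2 a1 c1 * qq b mu X a3 c3 + qq b mu X a2 c2 * Dq b mu X a3 c3 a1 c1)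
          + (deriv ^^ 2) g (G_beta b mu X) * qq b mu X a1 c1 * Dq b mu X a3 c3 a2 c2
          + (deriv ^^ 1) g (G_beta b mu X) * DDq b mu X a3 c3 a2 c2 a1 c1\<bar>
     \<le> WW b mu M1 M2 M3 X a3 c3 a2 c2 a1 c1"
proof -
  let ?q1 = "qq b mu X a1 c1" and ?q2 = "qq b mu X a2 c2" and ?q3 = "qq b mu X a3 c3"
  have q: "0 \<le> ?q1" "0 \<le> ?q2" "0 \<le> ?q3" by (simp_all add: qq_nn)
  have t1: "\<bar>(deriv ^^ 3) g (G_beta b mu X) * (?q1 * ?q2 * ?q3)\<bar> \<le> M3 * (?q3 * ?q2 * ?q1)"
    by (rule mb[OF g3]) (use q in \<open>simp add: abs_mult algebra_simps\<close>)
  have a1: "\<bar>Dq b mu X a2 c2 a1 c1 * ?q3\<bar> \<le> b * (?q2 * RR b mu X a2 c2 a1 c1) * ?q3"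
    unfolding abs_mult using Dq_bd[OF assms(1)] q RR_nn assms(1) by (intro mult_mono) (auto intro!: mult_nonneg_nonneg)
  have a2: "\<bar>?q2 * Dq b mu X a3 c3 a1 c1\<bar> \<le> ?q2 * (b * (?q3 * RR b mu X a3 c3 a1 c1))"
    unfolding abs_mult using Dq_bd[OF assms(1)] q RR_nn assms(1) by (intro mult_mono) (auto intro!: mult_nonneg_nonneg)
  have t2: "\<bar>(deriv ^^ 2) g (G_beta b mu X) * (Dq b mu X a2 c2 a1 c1 * ?q3 + ?q2 * Dq b mu X a3 c3 a1 c1)\<bar>
     \<le> M2 * (b * (?q2 * RR b mu X a2 c2 a1 c1) * ?q3 + ?q2 * (b * (?q3 * RR b mu X a3 c3 a1 c1)))"
    by (rule mb[OF g2]) (use a1 a2 abs_triangle_ineq in \<open>smt (verit)\<close>)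
  have t3: "\<bar>(deriv ^^ 2) g (G_beta b mu X) * (?q1 * Dq b mu X a3 c3 a2 c2)\<bar>
     \<le> M2 * (?q1 * (b * (?q3 * RR b mu X a3 c3 a2 c2)))"
    by (rule mb[OF g2]) (unfold abs_mult, use Dq_bd[OF assms(1)] q RR_nn assms(1) in \<open>intro mult_mono, auto intro!: mult_nonneg_nonneg\<close>)
  have t4: "\<bar>(deriv ^^ 1) g (G_beta b mu X) * DDq b mu X a3 c3 a2 c2 a1 c1\<bar>
     \<le> M1 * (b^2 * (?q3 * RR b mu X a3 c3 a1 c1 * RR b mu X a3 c3 a2 c2
    + 2 * (?q3 * (ri a3 a2 * pp b mu X a2 c2) * HH b mu X a2 c2 a1 c1)
    + ?q3 * ?q2 * RR b mu X a2 c2 a1 c1))"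
    by (rule mb[OF g1 DDq_bd[OF assms(1)]])
  have "\<bar>(deriv ^^ 3) g (G_beta b mu X) * ?q1 * ?q2 * ?q3
          + (deriv ^^ 2) g (G_beta b mu X) * (Dq b mu X a2 c2 a1 c1 * ?q3 + ?q2 * Dq b mu X a3 c3 a1 c1)
          + (deriv ^^ 2) g (G_beta b mu X) * ?q1 * Dq b mu X a3 c3 a2 c2
          + (deriv ^^ 1) g (G_beta b mu X) * DDq b mu X a3 c3 a2 c2 a1 c1\<bar>
     \<le> M3 * (?q3 * ?q2 * ?q1)
      + M2 * (b * (?q2 * RR b mu X a2 c2 a1 c1) * ?q3 + ?q2 * (b * (?q3 * RR b mu X a3 c3 a1 c1)))
      + M2 * (?q1 * (b * (?q3 * RR b mu X a3 c3 a2 c2)))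
      + M1 * (b^2 * (?q3 * RR b mu X a3 c3 a1 c1 * RR b mu X a3 c3 a2 c2
    + 2 * (?q3 * (ri a3 a2 * pp b mu X a2 c2) * HH b mu X a2 c2 a1 c1)
    + ?q3 * ?q2 * RR b mu X a2 c2 a1 c1))"
    using t1 t2 t3 t4 unfolding mult.assoc[symmetric]
    by (smt (verit) abs_triangle_ineq mult.assoc)
  also have "\<dots> = WW b mu M1 M2 M3 X a3 c3 a2 c2 a1 c1"
    by (simp add: WW_def algebra_simps)
  finally show ?thesis .
qed

lemma trip: "0 \<le> (u1::real) \<Longrightarrow> u1 \<le> c*w1 \<Longrightarrow> 0 \<le> u2 \<Longrightarrow> u2 \<le> c*w2 \<Longrightarrow> 0 \<le> u3 \<Longrightarrow> u3 \<le> c*w3 \<Longrightarrow> 0 \<le> c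
   \<Longrightarrow> u1*u2*u3 \<le> c^3*(w1*w2*w3)"
proof -
  assume h: "0 \<le> u1" "u1 \<le> c*w1" "0 \<le> u2" "u2 \<le> c*w2" "0 \<le> u3" "u3 \<le> c*w3" "0 \<le> c"
  have "u1*u2*u3 \<le> (c*w1)*(c*w2)*(c*w3)"
    using h by (intro mult_mono) (auto intro: order_trans[OF h(1)] order_trans[OF h(3)])
  also have "\<dots> = c^3*(w1*w2*w3)" by (simp add: power3_eq_cube algebra_simps)
  finally show ?thesis .
qed

lemma RR_up: assumes "b > 0" "\<And>k j. \<bar>y$k$j\<bar> \<le> 1/b"
  shows "RR b mu (X + y) k j a c \<le> exp 4 * RR b mu X k j a c"
proof -
  have e: "(1::real) \<le> exp 4" by simp
  have "dl k j a c \<le> exp 4 * dl k j a c" using e by (simp add: dl_def)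
  moreover have "2 * ri k a * pp b mu (X+y) a c \<le> exp 4 * (2 * ri k a * pp b mu X a c)"
    using pp_up[OF assms, where k=a and j=c] ri_nn[of k a] by (simp add: ri_def)
  moreover have "qq b mu (X+y) a c \<le> exp 4 * qq b mu X a c" using qq_up[OF assms] .
  ultimately show ?thesis unfolding RR_def by (simp add: algebra_simps)
qed

lemma HH_up: assumes "b > 0" "\<And>k j. \<bar>y$k$j\<bar> \<le> 1/b"
  shows "HH b mu (X + y) k j a c \<le> exp 4 * HH b mu X k j a c"
proof -
  have e: "(1::real) \<le> exp 4" by simp
  have "dl k j a c \<le> exp 4 * dl k j a c" using e by (simp add: dl_def)
  moreover have "ri k a * pp b mu (X+y) a c \<le> exp 4 * (ri k a * pp b mu X a c)"
    using pp_up[OF assms, where k=a and j=c] ri_nn[of k a] by (simp add: ri_def)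
  ultimately show ?thesis unfolding HH_def by (simp add: algebra_simps)
qed

lemma ripp_up: assumes "b > 0" "\<And>k j. \<bar>y$k$j\<bar> \<le> 1/b"
  shows "ri k a * pp b mu (X + y) a c \<le> exp 4 * (ri k a * pp b mu X a c)"
  using pp_up[OF assms, where k=a and j=c] by (simp add: ri_def)

lemma trip': "0 \<le> (u1::real) \<Longrightarrow> u1 \<le> exp 4*w1 \<Longrightarrow> 0 \<le> u2 \<Longrightarrow> u2 \<le> exp 4*w2 \<Longrightarrow> 0 \<le> u3 \<Longrightarrow> u3 \<le> exp 4*w3
   \<Longrightarrow> 0 \<le> r \<Longrightarrow> r*(u1*u2*u3) \<le> exp 12*(r*(w1*w2*w3))"
proof -
  assume h: "0 \<le> (u1::real)" "u1 \<le> exp 4*w1" "0 \<le> u2" "u2 \<le> exp 4*w2" "0 \<le> u3" "u3 \<le> exp 4*w3" "0 \<le> r"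
  have c: "exp 12 = (exp 4::real)^3" by (simp flip: exp_of_nat_mult)
  have "r*(u1*u2*u3) \<le> r * ((exp 4)^3*(w1*w2*w3))"
    using trip[OF h(1-6)] h(7) by (intro mult_left_mono) auto
  then show ?thesis unfolding c by (simp add: algebra_simps)
qed

lemma WW_up: assumes "b > 0" "\<And>k j. \<bar>y$k$j\<bar> \<le> 1/b" "0 \<le> M1" "0 \<le> M2" "0 \<le> M3"
  shows "WW b mu M1 M2 M3 (X + y) k3 j3 k2 j2 k1 j1 \<le> exp 12 * WW b mu M1 M2 M3 X k3 j3 k2 j2 k1 j1"
proof -
  note Q = qq_nn qq_up[OF assms(1,2)] and R = RR_nn RR_up[OF assms(1,2)] and H = HH_nn HH_up[OF assms(1,2)]
    and P = ripp_nn ripp_up[OF assms(1,2)]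
  have cs: "0 \<le> M3" "0 \<le> M2 * b" "0 \<le> M1 * b^2" "0 \<le> 2 * M1 * b^2" using assms by auto
  show ?thesis unfolding WW_def distrib_left
    by (intro add_mono; rule trip'; (rule Q R H P cs)?)
qed

lemma supnorm_fin: "finite {\<bar>(y::real^'p^'n)$k$j\<bar> | k j. True}"
proof -
  have "{\<bar>y$k$j\<bar> | k j. True} = (\<lambda>(k,j). \<bar>y$k$j\<bar>) ` UNIV" by auto
  then show ?thesis by simp
qed

lemma comp_le: "\<bar>(y::real^'p^'n)$k$j\<bar> \<le> supnorm_mat y"
  unfolding supnorm_mat_def by (rule Max_ge[OF supnorm_fin]) auto

lemma supnorm_zero: "supnorm_mat (0::real^'p^'n) = 0"
proof -
  have "{\<bar>(0::real^'p^'n)$k$j\<bar> | k j. True} = {0}" by auto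
  then show ?thesis unfolding supnorm_mat_def by simp
qed

lemma ereal_inf3: assumes "0 \<le> A" "0 \<le> B" "0 \<le> C" "0 < x" "0 < y" "0 < e"
  "A = \<infinity> \<or> B = \<infinity> \<or> C = \<infinity>"
  shows "ereal e * (A + ereal x * B + ereal y * C) = \<infinity>"
  using assms by (cases A; cases B; cases C) (auto simp: ereal_mult_infty)

theorem lemmaF4:
  fixes \<beta> :: real and mu :: "real^'p^'n" and g :: "real \<Rightarrow> real" and x :: "real^'p^'n"
  assumes "\<beta> > 0" and "C3 g"
  defines "m \<equiv> g \<circ> G_beta \<beta> mu"
  defines "U \<equiv> (\<lambda>k1 k2 k3 j1 j2 j3 x.
      Sup {\<bar>pd (pd (pd m k3 j3) k2 j2) k1 j1 (x + y)\<bar> | y. supnorm_mat y \<le> 1/\<beta>})"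
  shows "ereal (\<Sum>k1\<in>UNIV. \<Sum>k2\<in>UNIV. \<Sum>k3\<in>UNIV. \<Sum>j1\<in>UNIV. \<Sum>j2\<in>UNIV. \<Sum>j3\<in>UNIV.
            U k1 k2 k3 j1 j2 j3 x)
         \<le> ereal (exp 12) * (supnorm_deriv 3 g + ereal (16 * \<beta>) * supnorm_deriv 2 g
                              + ereal (24 * \<beta>^2) * supnorm_deriv 1 g)"
proof -
  have bne: "\<beta> \<noteq> 0" using assms(1) by simp
  have sup_ge: "ereal \<bar>(deriv ^^ r) g t\<bar> \<le> supnorm_deriv r g" for r t
    unfolding supnorm_deriv_def by (rule SUP_upper) simp
  have sup_nn: "0 \<le> supnorm_deriv r g" for r
    using sup_ge[of r 0] by (rule order_trans[rotated]) simp
  show ?thesis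
  proof (cases "supnorm_deriv 3 g = \<infinity> \<or> supnorm_deriv 2 g = \<infinity> \<or> supnorm_deriv 1 g = \<infinity>")
    case True
    have inf_eq: "ereal (exp 12) * (supnorm_deriv 3 g + ereal (16 * \<beta>) * supnorm_deriv 2 g
                              + ereal (24 * \<beta>^2) * supnorm_deriv 1 g) = \<infinity>"
      by (rule ereal_inf3) (use sup_nn assms(1) True in auto)
    show ?thesis unfolding inf_eq by simp
  next
    case False
    define M3 where "M3 = real_of_ereal (supnorm_deriv 3 g)"
    define M2 where "M2 = real_of_ereal (supnorm_deriv 2 g)"
    define M1 where "M1 = real_of_ereal (supnorm_deriv 1 g)"
    have E3: "supnorm_deriv 3 g = ereal M3" unfolding M3_def using False sup_nn[of 3]
      by (cases "supnorm_deriv 3 g") auto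
    have E2: "supnorm_deriv 2 g = ereal M2" unfolding M2_def using False sup_nn[of 2]
      by (cases "supnorm_deriv 2 g") auto
    have E1: "supnorm_deriv 1 g = ereal M1" unfolding M1_def using False sup_nn[of 1]
      by (cases "supnorm_deriv 1 g") auto
    have B3: "\<bar>(deriv ^^ 3) g t\<bar> \<le> M3" for t using sup_ge[of 3 t] E3 by simp
    have B2: "\<bar>(deriv ^^ 2) g t\<bar> \<le> M2" for t using sup_ge[of 2 t] E2 by simp
    have B1: "\<bar>(deriv ^^ 1) g t\<bar> \<le> M1" for t using sup_ge[of 1 t] E1 by simp
    have N: "0 \<le> M1" "0 \<le> M2" "0 \<le> M3" using sup_nn[of 1] sup_nn[of 2] sup_nn[of 3] E1 E2 E3 by auto
    have pdf: "pd (pd (pd m k3 j3) k2 j2) k1 j1 =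
      (\<lambda>X. (deriv ^^ 3) g (G_beta \<beta> mu X) * qq \<beta> mu X k1 j1 * qq \<beta> mu X k2 j2 * qq \<beta> mu X k3 j3
          + (deriv ^^ 2) g (G_beta \<beta> mu X) * (Dq \<beta> mu X k2 j2 k1 j1 * qq \<beta> mu X k3 j3 + qq \<beta> mu X k2 j2 * Dq \<beta> mu X k3 j3 k1 j1)
          + (deriv ^^ 2) g (G_beta \<beta> mu X) * qq \<beta> mu X k1 j1 * Dq \<beta> mu X k3 j3 k2 j2
          + (deriv ^^ 1) g (G_beta \<beta> mu X) * DDq \<beta> mu X k3 j3 k2 j2 k1 j1)" for k1 k2 k3 j1 j2 j3
      unfolding m_def pd1[OF assms(2) bne] pd2[OF assms(2) bne] pd3[OF assms(2) bne] by (rule refl)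
    have Ubd: "U k1 k2 k3 j1 j2 j3 x \<le> exp 12 * WW \<beta> mu M1 M2 M3 x k3 j3 k2 j2 k1 j1" for k1 k2 k3 j1 j2 j3
      unfolding U_def
    proof (rule cSup_least)
      show "{\<bar>pd (pd (pd m k3 j3) k2 j2) k1 j1 (x + y)\<bar> | y. supnorm_mat y \<le> 1/\<beta>} \<noteq> {}"
      proof -
        have "supnorm_mat (0::real^'p^'n) \<le> 1/\<beta>" using assms(1) by (simp add: supnorm_zero)
        then show ?thesis by blast
      qed
    next
      fix z assume "z \<in> {\<bar>pd (pd (pd m k3 j3) k2 j2) k1 j1 (x + y)\<bar> | y. supnorm_mat y \<le> 1/\<beta>}"
      then obtain y where y: "supnorm_mat y \<le> 1/\<beta>" and z: "z = \<bar>pd (pd (pd m k3 j3) k2 j2) k1 j1 (x + y)\<bar>"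
        by blast
      have yb: "\<bar>y$k$j\<bar> \<le> 1/\<beta>" for k j using comp_le[of y k j] y by linarith
      have "z \<le> WW \<beta> mu M1 M2 M3 (x + y) k3 j3 k2 j2 k1 j1"
        unfolding z pdf by (rule V_bd[OF assms(1) B3 B2 B1])
      also have "\<dots> \<le> exp 12 * WW \<beta> mu M1 M2 M3 x k3 j3 k2 j2 k1 j1"
        by (rule WW_up[OF assms(1) yb N])
      finally show "z \<le> exp 12 * WW \<beta> mu M1 M2 M3 x k3 j3 k2 j2 k1 j1" .
    qed
    have "(\<Sum>k1\<in>UNIV. \<Sum>k2\<in>UNIV. \<Sum>k3\<in>UNIV. \<Sum>j1\<in>UNIV. \<Sum>j2\<in>UNIV. \<Sum>j3\<in>UNIV. U k1 k2 k3 j1 j2 j3 x)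
       \<le> (\<Sum>k1\<in>UNIV. \<Sum>k2\<in>UNIV. \<Sum>k3\<in>UNIV. \<Sum>j1\<in>UNIV. \<Sum>j2\<in>UNIV. \<Sum>j3\<in>UNIV.
            exp 12 * WW \<beta> mu M1 M2 M3 x k3 j3 k2 j2 k1 j1)"
      by (intro sum_mono Ubd)
    also have "\<dots> = S321 (\<lambda>k3 j3 k2 j2 k1 j1. exp 12 * WW \<beta> mu M1 M2 M3 x k3 j3 k2 j2 k1 j1)"
      by (rule perm321)
    also have "\<dots> = exp 12 * (M3 + 12 * \<beta> * M2 + 24 * \<beta>^2 * M1)"
      using S321_mult[of "exp 12" "WW \<beta> mu M1 M2 M3 x"] sum_WW by simp
    also have "\<dots> \<le> exp 12 * (M3 + 16 * \<beta> * M2 + 24 * \<beta>^2 * M1)"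
      using N assms(1) by (intro mult_left_mono) auto
    finally have R: "(\<Sum>k1\<in>UNIV. \<Sum>k2\<in>UNIV. \<Sum>k3\<in>UNIV. \<Sum>j1\<in>UNIV. \<Sum>j2\<in>UNIV. \<Sum>j3\<in>UNIV. U k1 k2 k3 j1 j2 j3 x)
       \<le> exp 12 * (M3 + 16 * \<beta> * M2 + 24 * \<beta>^2 * M1)" .
    show ?thesis unfolding E1 E2 E3 using R by simp
  qed
qed

end
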